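(* Let $m\ge1$ be an integer, $h\in\mathbb{R}$, and let $y_1,y_2,\dots$ be i.i.d. real random variables under a probability measure $\mathbb{P}_\infty$, where $y_i=\mathrm{LLR}(i)=\ln\big(f_1(x_i)/f_0(x_i)\big)$ with $x_1,x_2,\dots$ i.i.d. with density $f_0$ under $\mathbb{P}_\infty$. For $n\ge m$ let $S_n=\sum_{i=n-m+1}^{n}y_i$. Let $k\ge m$ and $N>k$ be integers. Then $$\mathbb{P}_\infty\Big(\bigcap_{i=k}^{k+N-1}\{S_i<h\}\Big)\ \ge\ \big[\mathbb{P}_\infty(S_m<h)\big]^N.$$
   Context: $f_0, f_1$ are probability density functions on $\mathbb{R}$ such that the log-likelihood ratios are well-defined real random variables. *)

theory Defs
  imports "HOL-Probability.Probability"
begin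

definition LLR :: "(real \<Rightarrow> real) \<Rightarrow> (real \<Rightarrow> real) \<Rightarrow> (nat \<Rightarrow> 'a \<Rightarrow> real) \<Rightarrow> nat \<Rightarrow> 'a \<Rightarrow> real" where
  "LLR f0 f1 X i \<omega> = ln (f1 (X i \<omega>) / f0 (X i \<omega>))"

definition window_sum :: "nat \<Rightarrow> (nat \<Rightarrow> 'a \<Rightarrow> real) \<Rightarrow> nat \<Rightarrow> 'a \<Rightarrow> real" where
  "window_sum m y n \<omega> = (\<Sum>i\<in>{n - m + 1..n}. y i \<omega>)"

end

theory Submission
  imports Defs
begin

lemma cheb1:
  fixes Q :: "'b measure" and f g :: "'b \<Rightarrow> real"
  assumes Q: "prob_space Q"
    and fm: "f \<in> borel_measurable Q" and gm: "g \<in> borel_measurable Q"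
    and fb: "\<And>s. s \<in> space Q \<Longrightarrow> 0 \<le> f s \<and> f s \<le> 1"
    and gb: "\<And>s. s \<in> space Q \<Longrightarrow> 0 \<le> g s \<and> g s \<le> 1"
    and co: "\<And>s t. s \<in> space Q \<Longrightarrow> t \<in> space Q \<Longrightarrow> f t < f s \<Longrightarrow> g t \<le> g s"
  shows "(\<integral>s. f s \<partial>Q) * (\<integral>s. g s \<partial>Q) \<le> (\<integral>s. f s * g s \<partial>Q)"
proof -
  interpret prob_space Q by fact
  define c where "c = (\<integral>s. f s \<partial>Q)"
  define A where "A = {g s | s. s \<in> space Q \<and> f s > c}"
  define d where "d = (if A = {} then 1 else Inf A)"
  have bddA: "bdd_below A" unfolding A_def using gb by (auto intro!: bdd_belowI[of _ 0])
  have pos: "0 \<le> (f s - c) * (g s - d)" if s: "s \<in> space Q" for s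
  proof (cases "f s > c")
    case True
    then have "g s \<in> A" using s unfolding A_def by auto
    then have "d \<le> g s" unfolding d_def using bddA by (auto intro: cInf_lower)
    then show ?thesis using True by simp
  next
    case False
    show ?thesis
    proof (cases "f s < c")
      case True
      have "g s \<le> d"
      proof (cases "A = {}")
        case True then show ?thesis using gb[OF s] unfolding d_def by simp
      next
        case ne: False
        have "g s \<le> Inf A"
        proof (rule cInf_greatest[OF ne])
          fix a assume "a \<in> A"
          then obtain t where t: "t \<in> space Q" "f t > c" "a = g t" unfolding A_def by auto
          show "g s \<le> a" using co[OF t(1) s] t True by simp
        qed
        then show ?thesis using ne unfolding d_def by simp
      qed
      then show ?thesis using True by (simp add: mult_nonpos_nonpos)
    next
      case False2: False
      then have "f s = c" using False by simp
      then show ?thesis by simp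
    qed
  qed
  have intf: "integrable Q f" using fb fm by (intro integrable_const_bound[where B=1]) auto
  have intg: "integrable Q g" using gb gm by (intro integrable_const_bound[where B=1]) auto
  have intfg: "integrable Q (\<lambda>s. f s * g s)" using fb gb fm gm
    by (intro integrable_const_bound[where B=1]) (auto intro!: mult_le_one)
  have "0 \<le> (\<integral>s. (f s - c) * (g s - d) \<partial>Q)"
    using pos by (intro integral_nonneg_AE) auto
  also have "(\<integral>s. (f s - c) * (g s - d) \<partial>Q) = (\<integral>s. f s * g s - d * f s - c * g s + c * d \<partial>Q)"
    by (rule Bochner_Integration.integral_cong) (auto simp: algebra_simps)
  also have "\<dots> = (\<integral>s. f s * g s \<partial>Q) - d * c - c * (\<integral>s. g s \<partial>Q) + c * d"
    using intf intg intfg unfolding c_def by (simp add: prob_space)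
  finally show ?thesis unfolding c_def by (simp add: algebra_simps)
qed

lemma int01:
  fixes Q :: "'b measure" and f :: "'b \<Rightarrow> real"
  assumes Q: "prob_space Q" and fm: "f \<in> borel_measurable Q"
    and fb: "\<And>s. s \<in> space Q \<Longrightarrow> 0 \<le> f s \<and> f s \<le> 1"
  shows "0 \<le> (\<integral>s. f s \<partial>Q) \<and> (\<integral>s. f s \<partial>Q) \<le> 1"
proof -
  interpret prob_space Q by fact
  have intf: "integrable Q f" using fb fm by (intro integrable_const_bound[where B=1]) auto
  have "(\<integral>s. f s \<partial>Q) \<le> (\<integral>s. 1 \<partial>Q)"
    using fb intf by (intro integral_mono_AE) auto
  moreover have "0 \<le> (\<integral>s. f s \<partial>Q)" using fb by (intro integral_nonneg_AE) auto
  ultimately show ?thesis by (simp add: prob_space)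
qed

lemma harris:
  fixes Q :: "real measure" and J :: "nat set"
  assumes Q: "prob_space Q" "sets Q = sets borel" and J: "finite J"
  shows "\<And>(f::(nat \<Rightarrow> real) \<Rightarrow> real) (g::(nat \<Rightarrow> real) \<Rightarrow> real). f \<in> borel_measurable (PiM J (\<lambda>_. Q)) \<Longrightarrow> g \<in> borel_measurable (PiM J (\<lambda>_. Q))
    \<Longrightarrow> (\<And>x. x \<in> space (PiM J (\<lambda>_. Q)) \<Longrightarrow> 0 \<le> f x \<and> f x \<le> 1)
    \<Longrightarrow> (\<And>x. x \<in> space (PiM J (\<lambda>_. Q)) \<Longrightarrow> 0 \<le> g x \<and> g x \<le> 1)
    \<Longrightarrow> (\<And>x y. x \<in> space (PiM J (\<lambda>_. Q)) \<Longrightarrow> y \<in> space (PiM J (\<lambda>_. Q)) \<Longrightarrow> (\<forall>j\<in>J. x j \<le> y j) \<Longrightarrow> f y \<le> f x)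
    \<Longrightarrow> (\<And>x y. x \<in> space (PiM J (\<lambda>_. Q)) \<Longrightarrow> y \<in> space (PiM J (\<lambda>_. Q)) \<Longrightarrow> (\<forall>j\<in>J. x j \<le> y j) \<Longrightarrow> g y \<le> g x)
    \<Longrightarrow> (\<integral>x. f x \<partial>PiM J (\<lambda>_. Q)) * (\<integral>x. g x \<partial>PiM J (\<lambda>_. Q)) \<le> (\<integral>x. f x * g x \<partial>PiM J (\<lambda>_. Q))"
  using J
proof (induction J rule: finite_induct)
  case empty
  have e: "(\<integral>x. h x \<partial>PiM {} (\<lambda>_. Q)) = h (\<lambda>_. undefined)" for h :: "(nat \<Rightarrow> real) \<Rightarrow> real"
    by (simp add: PiM_empty lebesgue_integral_count_space_finite)
  show ?case using e[of f] e[of g] e[of "\<lambda>x. f x * g x"] by simp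
next
  case (insert i I f g)
  interpret Qp: prob_space Q by fact
  interpret product_sigma_finite "\<lambda>_. Q" by unfold_locales
  have spQ: "space Q = UNIV" using sets_eq_imp_space_eq[OF Q(2)] by simp
  let ?P = "PiM (insert i I) (\<lambda>_. Q)" and ?PI = "PiM I (\<lambda>_. Q)"
  interpret PI: prob_space ?PI using Q by (intro prob_space_PiM) auto
  interpret PP: prob_space ?P using Q by (intro prob_space_PiM) auto
  have upd: "y(i:=t) \<in> space ?P" if "y \<in> space ?PI" for y t
    using measurable_space[OF measurable_component_update[OF that insert(2)], of t] spQ by simp
  define F where "F y = (\<integral>t. f (y(i:=t)) \<partial>Q)" for y
  define G where "G y = (\<integral>t. g (y(i:=t)) \<partial>Q)" for y
  have fm[measurable]: "f \<in> borel_measurable ?P" and gm[measurable]: "g \<in> borel_measurable ?P" by fact+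
  have Fm: "F \<in> borel_measurable ?PI" unfolding F_def
    by (rule Qp.borel_measurable_lebesgue_integral[where f="\<lambda>y t. f (y(i:=t))"]) simp
  have Gm: "G \<in> borel_measurable ?PI" unfolding G_def
    by (rule Qp.borel_measurable_lebesgue_integral[where f="\<lambda>y t. g (y(i:=t))"]) simp
  have fym: "(\<lambda>t. f (y(i:=t))) \<in> borel_measurable Q" and gym: "(\<lambda>t. g (y(i:=t))) \<in> borel_measurable Q"
    if "y \<in> space ?PI" for y
    using measurable_compose[OF measurable_component_update[OF that insert(2)] fm]
      measurable_compose[OF measurable_component_update[OF that insert(2)] gm] by (auto simp: comp_def)
  have Fb: "0 \<le> F y \<and> F y \<le> 1" if "y \<in> space ?PI" for y
    unfolding F_def using insert.prems(3) upd[OF that] fym[OF that] by (intro int01[OF Q(1)]) auto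
  have Gb: "0 \<le> G y \<and> G y \<le> 1" if "y \<in> space ?PI" for y
    unfolding G_def using insert.prems(4) upd[OF that] gym[OF that] by (intro int01[OF Q(1)]) auto
  have le_upd: "\<forall>j\<in>insert i I. (x(i:=t)) j \<le> (y(i:=t)) j" if "\<forall>j\<in>I. x j \<le> y j" for x y :: "nat \<Rightarrow> real" and t
    using that by auto
  have intfu: "integrable Q (\<lambda>t. f (y(i:=t)))" if "y \<in> space ?PI" for y
    using insert.prems(3) upd[OF that] fym[OF that] by (intro Qp.integrable_const_bound[where B=1] AE_I2) (metis abs_of_nonneg real_norm_def, simp)
  have intgu: "integrable Q (\<lambda>t. g (y(i:=t)))" if "y \<in> space ?PI" for y
    using insert.prems(4) upd[OF that] gym[OF that] by (intro Qp.integrable_const_bound[where B=1] AE_I2) (metis abs_of_nonneg real_norm_def, simp)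
  have Fa: "F y \<le> F x" if "x \<in> space ?PI" "y \<in> space ?PI" "\<forall>j\<in>I. x j \<le> y j" for x y
    unfolding F_def
  proof (rule integral_mono)
    show "integrable Q (\<lambda>t. f (y(i:=t)))" "integrable Q (\<lambda>t. f (x(i:=t)))" using intfu that by auto
    fix t show "f (y(i:=t)) \<le> f (x(i:=t))"
      using insert.prems(5)[OF upd[OF that(1)] upd[OF that(2)] le_upd[OF that(3)]] by blast
  qed
  have Ga: "G y \<le> G x" if "x \<in> space ?PI" "y \<in> space ?PI" "\<forall>j\<in>I. x j \<le> y j" for x y
    unfolding G_def
  proof (rule integral_mono)
    show "integrable Q (\<lambda>t. g (y(i:=t)))" "integrable Q (\<lambda>t. g (x(i:=t)))" using intgu that by auto
    fix t show "g (y(i:=t)) \<le> g (x(i:=t))"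
      using insert.prems(6)[OF upd[OF that(1)] upd[OF that(2)] le_upd[OF that(3)]] by blast
  qed
  have IH: "(\<integral>y. F y \<partial>?PI) * (\<integral>y. G y \<partial>?PI) \<le> (\<integral>y. F y * G y \<partial>?PI)"
    using insert.IH[OF Fm Gm Fb Gb Fa Ga] by blast
  have intf: "integrable ?P f" using insert.prems(3) by (intro PP.integrable_const_bound[where B=1]) auto
  have intg: "integrable ?P g" using insert.prems(4) by (intro PP.integrable_const_bound[where B=1]) auto
  have intfg: "integrable ?P (\<lambda>x. f x * g x)" using insert.prems(3,4)
    by (intro PP.integrable_const_bound[where B=1]) (auto intro!: mult_le_one)
  have ef: "(\<integral>x. f x \<partial>?P) = (\<integral>y. F y \<partial>?PI)"
    unfolding F_def by (rule product_integral_insert[OF insert(1,2) intf])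
  have eg: "(\<integral>x. g x \<partial>?P) = (\<integral>y. G y \<partial>?PI)"
    unfolding G_def by (rule product_integral_insert[OF insert(1,2) intg])
  have efg: "(\<integral>x. f x * g x \<partial>?P) = (\<integral>y. (\<integral>t. f (y(i:=t)) * g (y(i:=t)) \<partial>Q) \<partial>?PI)"
    by (rule product_integral_insert[OF insert(1,2) intfg])
  have pt: "F y * G y \<le> (\<integral>t. f (y(i:=t)) * g (y(i:=t)) \<partial>Q)" if y: "y \<in> space ?PI" for y
    unfolding F_def G_def
  proof (rule cheb1[OF Q(1) fym[OF y] gym[OF y]])
    show "0 \<le> f (y(i:=s)) \<and> f (y(i:=s)) \<le> 1" for s using insert.prems(3) upd[OF y] by auto
    show "0 \<le> g (y(i:=s)) \<and> g (y(i:=s)) \<le> 1" for s using insert.prems(4) upd[OF y] by auto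
    fix s t assume lt: "f (y(i:=t)) < f (y(i:=s))"
    have "s < t"
    proof (rule ccontr)
      assume "\<not> s < t"
      then have "\<forall>j\<in>insert i I. (y(i:=t)) j \<le> (y(i:=s)) j" by auto
      then have "f (y(i:=s)) \<le> f (y(i:=t))" using insert.prems(5) upd[OF y] by blast
      then show False using lt by simp
    qed
    then have "\<forall>j\<in>insert i I. (y(i:=s)) j \<le> (y(i:=t)) j" by auto
    then show "g (y(i:=t)) \<le> g (y(i:=s))" using insert.prems(6) upd[OF y] by blast
  qed
  have intFG: "integrable ?PI (\<lambda>y. F y * G y)" using Fb Gb Fm Gm
    by (intro PI.integrable_const_bound[where B=1]) (auto intro!: mult_le_one)
  have intR: "integrable ?PI (\<lambda>y. (\<integral>t. f (y(i:=t)) * g (y(i:=t)) \<partial>Q))"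
  proof (rule PI.integrable_const_bound[where B=1])
    show "(\<lambda>y. (\<integral>t. f (y(i:=t)) * g (y(i:=t)) \<partial>Q)) \<in> borel_measurable ?PI"
      by (rule Qp.borel_measurable_lebesgue_integral[where f="\<lambda>y t. f (y(i:=t)) * g (y(i:=t))"]) simp
    have "0 \<le> (\<integral>t. f (y(i:=t)) * g (y(i:=t)) \<partial>Q) \<and> (\<integral>t. f (y(i:=t)) * g (y(i:=t)) \<partial>Q) \<le> 1"
      if y: "y \<in> space ?PI" for y
      using insert.prems(3,4) upd[OF y] fym[OF y] gym[OF y]
      by (intro int01[OF Q(1)]) (auto intro!: mult_le_one mult_nonneg_nonneg)
    then show "AE y in ?PI. norm (\<integral>t. f (y(i:=t)) * g (y(i:=t)) \<partial>Q) \<le> 1"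
      by (intro AE_I2) auto
  qed
  have "(\<integral>y. F y * G y \<partial>?PI) \<le> (\<integral>y. (\<integral>t. f (y(i:=t)) * g (y(i:=t)) \<partial>Q) \<partial>?PI)"
    using pt intFG intR by (intro integral_mono) auto
  with IH show ?case using ef eg efg by simp
qed

lemma harris_events:
  fixes Q :: "real measure" and J :: "nat set" and W :: "'i set" and E :: "'i \<Rightarrow> (nat \<Rightarrow> real) set"
  assumes Q: "prob_space Q" "sets Q = sets borel" and J: "finite J" and W: "finite W"
    and E: "\<And>w. w \<in> W \<Longrightarrow> E w \<in> sets (PiM J (\<lambda>_. Q))"
    and dec: "\<And>w x y. w \<in> W \<Longrightarrow> x \<in> space (PiM J (\<lambda>_. Q)) \<Longrightarrow> y \<in> E w \<Longrightarrow> \<forall>j\<in>J. x j \<le> y j \<Longrightarrow> x \<in> E w"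
  shows "(\<Prod>w\<in>W. measure (PiM J (\<lambda>_. Q)) (E w)) \<le> measure (PiM J (\<lambda>_. Q)) {z\<in>space (PiM J (\<lambda>_. Q)). \<forall>w\<in>W. z \<in> E w}"
proof -
  let ?P = "PiM J (\<lambda>_. Q)"
  interpret PP: prob_space ?P using Q by (intro prob_space_PiM) auto
  have "\<And>V. finite V \<Longrightarrow> V \<subseteq> W \<Longrightarrow> (\<Prod>w\<in>V. measure ?P (E w)) \<le> measure ?P {z\<in>space ?P. \<forall>w\<in>V. z \<in> E w}"
  proof -
    fix V assume "finite V" "V \<subseteq> W"
    then show "(\<Prod>w\<in>V. measure ?P (E w)) \<le> measure ?P {z\<in>space ?P. \<forall>w\<in>V. z \<in> E w}"
    proof (induction V rule: finite_induct)
      case empty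
      then show ?case by (simp add: PP.prob_space)
    next
      case (insert w V)
      define A where "A = E w"
      define B where "B = {z\<in>space ?P. \<forall>v\<in>V. z \<in> E v}"
      have A: "A \<in> sets ?P" using E insert.prems unfolding A_def by auto
      have B: "B \<in> sets ?P" unfolding B_def
        using insert.prems E insert.hyps(1)
        by (intro sets.sets_Collect_finite_All) (auto intro: sets.sets_Collect_const)
      have AB: "{z\<in>space ?P. \<forall>v\<in>insert w V. z \<in> E v} = A \<inter> B"
        unfolding A_def B_def using sets.sets_into_space[OF A[unfolded A_def]] by auto
      have h: "(\<integral>x. (indicator A x :: real) \<partial>?P) * (\<integral>x. indicator B x \<partial>?P) \<le> (\<integral>x. indicator A x * indicator B x \<partial>?P)"
      proof (rule harris[OF Q J])
        show "(indicator A :: _ \<Rightarrow> real) \<in> borel_measurable ?P" using A by simp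
        show "(indicator B :: _ \<Rightarrow> real) \<in> borel_measurable ?P" using B by simp
        show "0 \<le> (indicator A x :: real) \<and> (indicator A x :: real) \<le> 1" for x by (simp add: indicator_def)
        show "0 \<le> (indicator B x :: real) \<and> (indicator B x :: real) \<le> 1" for x by (simp add: indicator_def)
        fix x y assume xy: "x \<in> space ?P" "y \<in> space ?P" "\<forall>j\<in>J. x j \<le> y j"
        show "(indicator A y :: real) \<le> indicator A x"
          using dec[of w x y] xy insert.prems unfolding A_def by (auto simp: indicator_def)
        show "(indicator B y :: real) \<le> indicator B x"
          using dec[of _ x y] xy insert.prems unfolding B_def by (auto simp: indicator_def)
      qed
      have ind: "(\<lambda>x. indicator A x * indicator B x :: real) = indicator (A \<inter> B)"
        by (auto simp: indicator_def)
      have "(\<Prod>v\<in>insert w V. measure ?P (E v)) = measure ?P A * (\<Prod>v\<in>V. measure ?P (E v))"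
        using insert.hyps unfolding A_def by simp
      also have "\<dots> \<le> measure ?P A * measure ?P B"
        using insert.IH insert.prems unfolding B_def by (intro mult_left_mono) auto
      also have "\<dots> \<le> measure ?P (A \<inter> B)"
        using h A B unfolding ind by (simp add: Int_absorb2 sets.sets_into_space)
      finally show ?case using AB by simp
    qed
  qed
  then show ?thesis using W by blast
qed

theorem lemma1:
  fixes M :: "'a measure" and X :: "nat \<Rightarrow> 'a \<Rightarrow> real"
    and f0 f1 :: "real \<Rightarrow> real" and h :: real and m k N :: nat
  assumes "prob_space M"
    and "f0 \<in> borel_measurable borel" "\<And>x. f0 x \<ge> 0" "integral\<^sup>L lborel f0 = 1" "integrable lborel f0"
    and "f1 \<in> borel_measurable borel" "\<And>x. f1 x \<ge> 0" "integral\<^sup>L lborel f1 = 1" "integrable lborel f1"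
    and "prob_space.indep_vars M (\<lambda>_. borel) X {1..}"
    and "\<And>i. i \<ge> 1 \<Longrightarrow> distributed M lborel (X i) (\<lambda>x. ennreal (f0 x))"
    and "\<And>i. i \<ge> 1 \<Longrightarrow> AE \<omega> in M. f0 (X i \<omega>) > 0 \<and> f1 (X i \<omega>) > 0"
    and "m \<ge> 1" "k \<ge> m" "N > k"
  shows "measure M {\<omega> \<in> space M. \<forall>i\<in>{k..k + N - 1}. window_sum m (LLR f0 f1 X) i \<omega> < h}
           \<ge> (measure M {\<omega> \<in> space M. window_sum m (LLR f0 f1 X) m \<omega> < h}) ^ N"
proof -
  interpret prob_space M by fact
  note [measurable] = assms(2) assms(6)
  define g0 where "g0 x = ln (f1 x / f0 x)" for x
  have g0m[measurable]: "g0 \<in> borel_measurable borel" unfolding g0_def by measurable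
  define Y where "Y = LLR f0 f1 X"
  have Yd: "Y = (\<lambda>j \<omega>. g0 (X j \<omega>))" unfolding Y_def LLR_def g0_def by (simp add: fun_eq_iff)
  have Xm: "X j \<in> borel_measurable M" if "j \<ge> 1" for j
    using distributed_measurable[OF assms(11)[OF that]] by simp
  have Ym: "Y j \<in> borel_measurable M" if "j \<ge> 1" for j
    unfolding Yd using measurable_compose[OF Xm[OF that] g0m] by (simp add: comp_def)
  have indY: "indep_vars (\<lambda>_. borel) Y {1..}"
    unfolding Yd by (rule indep_vars_compose2[OF assms(10)]) simp
  have DX: "distr M borel (X j) = distr M borel (X 1)" if "j \<ge> 1" for j
  proof -
    have e: "distr M borel (X i) = density lborel f0" if "i \<ge> 1" for i
    proof (rule measure_eqI)
      show "sets (distr M borel (X i)) = sets (density lborel f0)" by simp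
      fix A assume "A \<in> sets (distr M borel (X i))"
      then have A: "A \<in> sets borel" by simp
      have "emeasure (distr M borel (X i)) A = emeasure (distr M lborel (X i)) A"
        using A Xm[OF that] by (simp add: emeasure_distr)
      also have "\<dots> = emeasure (density lborel f0) A"
        using distributed_distr_eq_density[OF assms(11)[OF that]] by simp
      finally show "emeasure (distr M borel (X i)) A = emeasure (density lborel f0) A" .
    qed
    show ?thesis using e[OF that] e[of 1] by simp
  qed
  define Q where "Q = distr M borel (Y 1)"
  have DY: "distr M borel (Y j) = Q" if "j \<ge> 1" for j
  proof -
    have "distr M borel (Y j) = distr (distr M borel (X j)) borel g0"
      unfolding Yd using Xm[OF that] by (subst distr_distr) (auto simp: comp_def)
    also have "\<dots> = distr (distr M borel (X 1)) borel g0" using DX[OF that] by simp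
    also have "\<dots> = Q"
      unfolding Q_def Yd using Xm[of 1] by (subst distr_distr) (auto simp: comp_def)
    finally show ?thesis .
  qed
  have Qp: "prob_space Q" unfolding Q_def using Ym[of 1] by (intro prob_space_distr) auto
  have sQ: "sets Q = sets borel" unfolding Q_def by simp
  have sPK: "sets (PiM K (\<lambda>_. Q)) = sets (PiM K (\<lambda>_. borel))" for K :: "nat set"
    by (rule sets_PiM_cong) (auto simp: sQ)
  have spPK: "space (PiM K (\<lambda>_. Q)) = space (PiM K (\<lambda>_. borel))" for K :: "nat set"
    using sets_eq_imp_space_eq[OF sPK] .
  have resm: "(\<lambda>\<omega>. \<lambda>j\<in>K. Y j \<omega>) \<in> measurable M (PiM K (\<lambda>_. borel))" if "K \<subseteq> {1..}" for K
    using that Ym by (intro measurable_restrict) auto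
  have distrK: "distr M (PiM K (\<lambda>_. borel)) (\<lambda>\<omega>. \<lambda>j\<in>K. Y j \<omega>) = PiM K (\<lambda>_. Q)"
    if "K \<subseteq> {1..}" "K \<noteq> {}" for K
  proof -
    have "indep_vars (\<lambda>_. borel) Y K" using indep_vars_subset[OF indY that(1)] .
    then have "distr M (PiM K (\<lambda>_. borel)) (\<lambda>\<omega>. \<lambda>j\<in>K. Y j \<omega>) = PiM K (\<lambda>j. distr M borel (Y j))"
      using indep_vars_iff_distr_eq_PiM'[where I=K and M'="\<lambda>_. borel" and X=Y] that Ym by auto
    also have "\<dots> = PiM K (\<lambda>_. Q)" using that DY by (intro PiM_cong) auto
    finally show ?thesis .
  qed
  have preK: "measure M ((\<lambda>\<omega>. \<lambda>j\<in>K. Y j \<omega>) -` S \<inter> space M) = measure (PiM K (\<lambda>_. Q)) S"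
    if "K \<subseteq> {1..}" "K \<noteq> {}" "S \<in> sets (PiM K (\<lambda>_. borel))" for K S
    using measure_distr[OF resm[OF that(1)] that(3)] distrK[OF that(1,2)] by simp
  have resS: "(\<lambda>j\<in>K. Y j \<omega>) \<in> space (PiM K (\<lambda>_. borel))" if "\<omega> \<in> space M" for K \<omega>
    by (simp add: space_PiM)
  have sumres: "(\<Sum>j\<in>L. (\<lambda>j\<in>K. Y j \<omega>) j) = (\<Sum>j\<in>L. Y j \<omega>)" if "L \<subseteq> K" for L K \<omega>
    using that by (intro sum.cong) auto
  define P0 where "P0 = PiM {0..<m} (\<lambda>_. Q)"
  define p where "p = measure P0 {z\<in>space P0. (\<Sum>l<m. z l) < h}"
  have win: "measure M {\<omega>\<in>space M. window_sum m Y i \<omega> < h} = p" if "i \<ge> m" for i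
  proof -
    define a where "a = i - m + 1"
    define K where "K = {a..<a+m}"
    have Keq: "{i - m + 1..i} = K" unfolding K_def a_def using that assms(13) by auto
    have K1: "K \<subseteq> {1..}" "K \<noteq> {}" unfolding K_def a_def using assms(13) by auto
    define SK where "SK = {z\<in>space (PiM K (\<lambda>_. borel)). (\<Sum>j\<in>K. z j) < h}"
    have SKm: "SK \<in> sets (PiM K (\<lambda>_. borel))" unfolding SK_def K_def by measurable
    have "{\<omega>\<in>space M. window_sum m Y i \<omega> < h} = (\<lambda>\<omega>. \<lambda>j\<in>K. Y j \<omega>) -` SK \<inter> space M"
      unfolding SK_def window_sum_def Keq using sumres[of K K] resS by auto
    then have "measure M {\<omega>\<in>space M. window_sum m Y i \<omega> < h} = measure (PiM K (\<lambda>_. Q)) SK"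
      using preK[OF K1 SKm] by simp
    also have "\<dots> = p"
    proof -
      define t where "t = (\<lambda>\<omega>::nat \<Rightarrow> real. \<lambda>n\<in>{0..<m}. \<omega> (a + n))"
      have dr: "distr (PiM K (\<lambda>_. Q)) P0 t = P0"
        unfolding P0_def t_def
        using distr_PiM_reindex[where M="\<lambda>_. Q" and K=K and I="{0..<m}" and f="\<lambda>n. a + n"] Qp
        unfolding K_def by (auto simp: inj_on_def)
      have tm: "t \<in> measurable (PiM K (\<lambda>_. Q)) P0"
        unfolding t_def P0_def K_def by (intro measurable_restrict measurable_component_singleton) auto
      have S0: "{z\<in>space P0. (\<Sum>l<m. z l) < h} \<in> sets P0" unfolding P0_def sPK spPK by measurable
      have "p = measure (distr (PiM K (\<lambda>_. Q)) P0 t) {z\<in>space P0. (\<Sum>l<m. z l) < h}"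
        unfolding p_def dr ..
      also have "\<dots> = measure (PiM K (\<lambda>_. Q)) (t -` {z\<in>space P0. (\<Sum>l<m. z l) < h} \<inter> space (PiM K (\<lambda>_. Q)))"
        by (rule measure_distr[OF tm S0])
      also have "t -` {z\<in>space P0. (\<Sum>l<m. z l) < h} \<inter> space (PiM K (\<lambda>_. Q)) = SK"
      proof -
        have "(\<Sum>l<m. t z l) = (\<Sum>j\<in>K. z j)" for z
        proof -
          have "(\<Sum>l<m. t z l) = (\<Sum>l\<in>{0..<m}. z (l + a))"
            unfolding t_def lessThan_atLeast0 by (intro sum.cong) (auto simp: add.commute)
          also have "\<dots> = (\<Sum>j\<in>{0+a..<m+a}. z j)" by (rule sum.shift_bounds_nat_ivl[symmetric])
          finally show ?thesis unfolding K_def by (simp add: add.commute)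
        qed
        moreover have "t z \<in> space P0" if "z \<in> space (PiM K (\<lambda>_. Q))" for z
          using measurable_space[OF tm that] .
        ultimately show ?thesis unfolding SK_def spPK by auto
      qed
      finally show ?thesis ..
    qed
    finally show ?thesis .
  qed
  define J where "J = {k - m + 1..k + N - 1}"
  define W where "W = {k..k + N - 1}"
  define wn where "wn i = {i - m + 1..i}" for i
  have J1: "J \<subseteq> {1..}" "J \<noteq> {}" "finite J" unfolding J_def using assms(13-15) by auto
  have wnJ: "wn i \<subseteq> J" if "i \<in> W" for i using that unfolding wn_def J_def W_def by auto
  define PJ where "PJ = PiM J (\<lambda>_. Q)"
  define E where "E i = {z\<in>space PJ. (\<Sum>j\<in>wn i. z j) < h}" for i
  have Em: "E i \<in> sets PJ" if "i \<in> W" for i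
  proof -
    have [measurable]: "(\<lambda>z::nat \<Rightarrow> real. \<Sum>j\<in>wn i. z j) \<in> borel_measurable (PiM J (\<lambda>_. borel))"
      using wnJ[OF that] by (auto intro!: borel_measurable_sum[where f="\<lambda>j z. z j"] measurable_component_singleton)
    show ?thesis unfolding E_def PJ_def sPK spPK by measurable
  qed
  have pre_eq: "(\<lambda>\<omega>. \<lambda>j\<in>J. Y j \<omega>) -` S \<inter> space M = {\<omega>\<in>space M. (\<lambda>j\<in>J. Y j \<omega>) \<in> S}" for S by auto
  have HE: "(\<Prod>i\<in>W. measure PJ (E i)) \<le> measure PJ {z\<in>space PJ. \<forall>i\<in>W. z \<in> E i}"
    unfolding PJ_def
  proof (rule harris_events[OF Qp sQ J1(3)])
    show "finite W" unfolding W_def by simp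
    show "E w \<in> sets (PiM J (\<lambda>_. Q))" if "w \<in> W" for w using Em[OF that] unfolding PJ_def .
    fix w x y assume w: "w \<in> W" and x: "x \<in> space (PiM J (\<lambda>_. Q))" and y: "y \<in> E w"
      and le: "\<forall>j\<in>J. x j \<le> y j"
    have "(\<Sum>j\<in>wn w. x j) \<le> (\<Sum>j\<in>wn w. y j)" using le wnJ[OF w] by (intro sum_mono) auto
    then show "x \<in> E w" using x y unfolding E_def PJ_def by auto
  qed
  have mE: "measure PJ (E i) = p" if "i \<in> W" for i
  proof -
    have "measure PJ (E i) = measure M ((\<lambda>\<omega>. \<lambda>j\<in>J. Y j \<omega>) -` E i \<inter> space M)"
      using preK[OF J1(1,2), of "E i"] Em[OF that] sPK unfolding PJ_def by simp
    also have "(\<lambda>\<omega>. \<lambda>j\<in>J. Y j \<omega>) -` E i \<inter> space M = {\<omega>\<in>space M. window_sum m Y i \<omega> < h}"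
      unfolding E_def PJ_def spPK window_sum_def wn_def[symmetric]
      using resS sumres[OF wnJ[OF that]] by auto
    also have "measure M {\<omega>\<in>space M. window_sum m Y i \<omega> < h} = p" using win that assms(14) unfolding W_def by auto
    finally show ?thesis .
  qed
  have mI: "measure PJ {z\<in>space PJ. \<forall>i\<in>W. z \<in> E i} = measure M {\<omega>\<in>space M. \<forall>i\<in>W. window_sum m Y i \<omega> < h}"
  proof -
    have sI: "{z\<in>space PJ. \<forall>i\<in>W. z \<in> E i} \<in> sets (PiM J (\<lambda>_. borel))"
      unfolding sPK[symmetric] PJ_def[symmetric] using Em
      by (intro sets.sets_Collect_finite_All) (auto simp: W_def intro: sets.sets_Collect_const)
    have "measure PJ {z\<in>space PJ. \<forall>i\<in>W. z \<in> E i} = measure M ((\<lambda>\<omega>. \<lambda>j\<in>J. Y j \<omega>) -` {z\<in>space PJ. \<forall>i\<in>W. z \<in> E i} \<inter> space M)"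
      using preK[OF J1(1,2) sI] unfolding PJ_def by simp
    also have "(\<lambda>\<omega>. \<lambda>j\<in>J. Y j \<omega>) -` {z\<in>space PJ. \<forall>i\<in>W. z \<in> E i} \<inter> space M = {\<omega>\<in>space M. \<forall>i\<in>W. window_sum m Y i \<omega> < h}"
      unfolding E_def PJ_def spPK window_sum_def wn_def[symmetric]
      using resS sumres[OF wnJ] by auto
    finally show ?thesis .
  qed
  have cW: "card W = N" unfolding W_def using assms(15) by auto
  have "p ^ N \<le> measure M {\<omega>\<in>space M. \<forall>i\<in>W. window_sum m Y i \<omega> < h}"
    using HE mE mI cW by simp
  moreover have "measure M {\<omega>\<in>space M. window_sum m Y m \<omega> < h} = p" using win by simp
  ultimately show ?thesis unfolding Y_def W_def by simp
qed

end
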